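(* Let $\mu=1/2$, $e=(1/2,0)$, $s=(-1/2,0)$ and $$V(q)=-\frac{1}{2|q-e|}-\frac{1}{2|q-s|}-\frac12|q|^2,\qquad q\in\mathbb{R}^2\setminus\{e,s\}.$$ There exists $\epsilon>0$ with the following property. Let $\mathfrak{K}^b_{-2+\epsilon}$ be the bounded connected component of $\{q\in\mathbb{R}^2\setminus\{e,s\}: V(q)\le -2+\epsilon\}$ that contains $e$ and $s$ in its closure. Then every $q\in\mathfrak{K}^b_{-2+\epsilon}$ with $\frac{\partial V}{\partial q_2}(q)=0$ satisfies $q_2=0$.
   Context: For $\mu=1/2$ the origin is the collinear critical point $\ell_1$ of $V$ between the primaries, and $V(0)=-2$ is the first critical value. *)

theory Defs
  imports "HOL-Analysis.Analysis"
begin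

text \<open>Points of the plane are pairs (q1, q2); norm on real \<times> real is Euclidean.\<close>

definition prim_e :: "real \<times> real" where "prim_e = (1/2, 0)"
definition prim_s :: "real \<times> real" where "prim_s = (-1/2, 0)"

text \<open>Effective potential for mu = 1/2 (only meaningful off {e, s}).\<close>
definition Vpot :: "real \<times> real \<Rightarrow> real" where
  "Vpot q = - 1 / (2 * norm (q - prim_e)) - 1 / (2 * norm (q - prim_s)) - (1/2) * (norm q)\<^sup>2"

definition dV_dq2 :: "real \<times> real \<Rightarrow> real" where
  "dV_dq2 q = deriv (\<lambda>t. Vpot (fst q, t)) (snd q)"

definition sublevel :: "real \<Rightarrow> (real \<times> real) set" where
  "sublevel c = {q. q \<noteq> prim_e \<and> q \<noteq> prim_s \<and> Vpot q \<le> c}"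

definition bdd_comp :: "real \<Rightarrow> (real \<times> real) set \<Rightarrow> bool" where
  "bdd_comp c K \<longleftrightarrow> K \<in> components (sublevel c) \<and> bounded K
      \<and> prim_e \<in> closure K \<and> prim_s \<in> closure K"

end

theory Submission
  imports Defs
begin

lemma lim3: "(\<lambda>n. 1/(real n + 3)) \<longlonglongrightarrow> (0::real)"
  using LIMSEQ_ignore_initial_segment[OF lim_inverse_n', of 3] by (simp add: add.commute)

lemma alg1: "(r::real) > 0 \<Longrightarrow> -(1/2) * (- (((inverse r / 2) * (2*b)) * inverse(r ^ Suc (Suc 0)))) = b/(2 * r^3)"
  by (simp add: field_simps power3_eq_cube)
lemma d1: assumes "c + b^2 > 0"
  shows "((\<lambda>t. -1/(2 * sqrt(c+t^2))) has_real_derivative b/(2 * sqrt(c+b^2)^3)) (at b)"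
proof -
  have s: "sqrt(c+b^2) > 0" using assms by simp
  have r: "((\<lambda>t. sqrt(c+t^2)) has_real_derivative (inverse (sqrt (c+b^2)) / 2) * (2*b)) (at b)"
    apply (rule DERIV_chain2[where g="\<lambda>t. c+t^2", OF DERIV_real_sqrt])
    apply (simp add: assms)
    apply (rule derivative_eq_intros | simp)+
    done
  have "((\<lambda>t. inverse (sqrt(c+t^2))) has_real_derivative
      - (((inverse (sqrt (c+b^2)) / 2) * (2*b)) * inverse(sqrt(c+b^2) ^ Suc (Suc 0)))) (at b)"
    apply (rule DERIV_inverse_fun[OF r]) using s by linarith
  then have "((\<lambda>t. -(1/2) * inverse (sqrt(c+t^2))) has_real_derivative
      -(1/2) * (- (((inverse (sqrt (c+b^2)) / 2) * (2*b)) * inverse(sqrt(c+b^2) ^ Suc (Suc 0))))) (at b)"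
    by (rule DERIV_cmult)
  then have "((\<lambda>t. -(1/2) * inverse (sqrt(c+t^2))) has_real_derivative b/(2 * sqrt(c+b^2)^3)) (at b)"
    by (simp only: alg1[OF s])
  moreover have "(\<lambda>t. -(1/2) * inverse (sqrt(c+t^2))) = (\<lambda>t. -1/(2 * sqrt(c+t^2)))"
    by (rule ext) (simp add: inverse_eq_divide)
  ultimately show ?thesis by (simp only:)
qed

lemma sphere_ineq:
  fixes a b :: real assumes h: "a^2 + b^2 = 1"
  shows "1/(2 * sqrt((a-1/2)^2+b^2)) + 1/(2 * sqrt((a+1/2)^2+b^2)) < 149/100"
proof -
  define u where "u = sqrt((a-1/2)^2+b^2)"
  define v where "v = sqrt((a+1/2)^2+b^2)"
  have "a^2 \<le> 1" using h by (smt (verit) zero_le_power2)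
  hence "\<bar>a\<bar> \<le> 1" by (simp add: abs_square_le_1)
  hence a1: "a \<le> 1" "-1 \<le> a" by auto
  have e1: "(a-1/2)^2+b^2 = 5/4 - a" using h by (simp add: power2_eq_square algebra_simps)
  have e2: "(a+1/2)^2+b^2 = 5/4 + a" using h by (simp add: power2_eq_square algebra_simps)
  have u2: "u^2 = 5/4 - a" unfolding u_def e1 using a1 by simp
  have v2: "v^2 = 5/4 + a" unfolding v_def e2 using a1 by simp
  have "u \<noteq> 0" using u2 a1 by auto
  hence up: "u > 0" unfolding u_def by (simp add: order_le_neq_trans)
  have "v \<noteq> 0" using v2 a1 by auto
  hence vp: "v > 0" unfolding v_def by (simp add: order_le_neq_trans)
  define p where "p = u * v"
  have pp: "p > 0" using up vp p_def by simp
  have "p^2 = u^2 * v^2" by (simp add: p_def power_mult_distrib)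
  also have "\<dots> = (5/4-a)*(5/4+a)" using u2 v2 by simp
  also have "\<dots> = 25/16 - a^2" by (simp add: algebra_simps power2_eq_square)
  finally have p2: "p^2 = 25/16 - a^2" .
  have "a^2 \<le> 1" using a1 by (simp add: abs_square_le_1)
  moreover have "(3/4::real)^2 = 9/16" by (simp add: power2_eq_square)
  ultimately have "p^2 \<ge> (3/4)^2" using p2 by linarith
  hence p34: "p \<ge> 3/4" by (rule power2_le_imp_le) (use pp in linarith)
  have s2: "(u+v)^2 = 5/2 + 2*p" using u2 v2 p_def by (simp add: power2_eq_square algebra_simps)
  have "p * p \<ge> (3/4) * p" using p34 pp by (simp add: mult_right_mono)
  moreover have "(298/100 * p)^2 = 22201/2500 * (p * p)" by (simp add: power2_eq_square)
  ultimately have "(u+v)^2 < (298/100 * p)^2" using s2 p34 by linarith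
  hence "u + v < 298/100 * p" by (rule power2_less_imp_less) (use pp in linarith)
  hence "(u+v)/(2*p) < 149/100" using pp by (simp add: divide_simps)
  moreover have "(u+v)/(2*p) = 1/(2*u) + 1/(2 * v)" using up vp p_def by (simp add: field_simps)
  ultimately show ?thesis unfolding u_def v_def by simp
qed

lemma inner_ineq:
  fixes r :: real assumes "r > 0" "1/(2*r^3) \<le> 1"
  shows "1/(2*r) \<le> 13/20"
proof -
  have "r^3 \<ge> 1/2" using assms by (simp add: divide_simps)
  have "r \<ge> 10/13"
  proof (rule ccontr)
    assume "\<not> r \<ge> 10/13"
    hence "r^3 < (10/13)^3" using assms by (intro power_strict_mono) auto
    moreover have "(10/13::real)^3 = 1000/2197" by (simp add: power3_eq_cube)
    ultimately show False using \<open>r^3 \<ge> 1/2\<close> by simp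
  qed
  thus ?thesis using assms by (simp add: divide_simps)
qed

lemma Vpot_eq: "Vpot (a,b) = -1/(2 * sqrt((a-1/2)^2+b^2)) - 1/(2 * sqrt((a+1/2)^2+b^2)) - (a^2+b^2)/2"
  by (simp add: Vpot_def prim_e_def prim_s_def norm_Pair)

lemma dV:
  assumes "(a,b) \<noteq> prim_e" "(a,b) \<noteq> prim_s"
  shows "dV_dq2 (a,b) = b/(2 * sqrt((a-1/2)^2+b^2)^3) + b/(2 * sqrt((a+1/2)^2+b^2)^3) - b"
proof -
  have c1: "(a-1/2)^2 + b^2 > 0" using assms(1) by (auto simp: sum_power2_gt_zero_iff prim_e_def)
  have c2: "(a+1/2)^2 + b^2 > 0" using assms(2) by (auto simp: sum_power2_gt_zero_iff prim_s_def)
  have f: "(\<lambda>t. Vpot (a,t)) = (\<lambda>t. -1/(2 * sqrt((a-1/2)^2+t^2)) - 1/(2 * sqrt((a+1/2)^2+t^2)) - (a^2+t^2)/2)"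
    by (rule ext) (rule Vpot_eq)
  have q: "((\<lambda>t. (a^2+t^2)/2) has_real_derivative b) (at b)"
    apply (rule derivative_eq_intros | simp)+
    done
  have "((\<lambda>t. (-1/(2 * sqrt((a-1/2)^2+t^2)) + -1/(2 * sqrt((a+1/2)^2+t^2))) - (a^2+t^2)/2) has_real_derivative
     b/(2 * sqrt((a-1/2)^2+b^2)^3) + b/(2 * sqrt((a+1/2)^2+b^2)^3) - b) (at b)"
    by (rule DERIV_diff[OF DERIV_add[OF d1[OF c1] d1[OF c2]] q])
  moreover have "(\<lambda>t. (-1/(2 * sqrt((a-1/2)^2+t^2)) + -1/(2 * sqrt((a+1/2)^2+t^2))) - (a^2+t^2)/2)
     = (\<lambda>t. -1/(2 * sqrt((a-1/2)^2+t^2)) - 1/(2 * sqrt((a+1/2)^2+t^2)) - (a^2+t^2)/2)"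
    by (rule ext) simp
  ultimately have "((\<lambda>t. -1/(2 * sqrt((a-1/2)^2+t^2)) - 1/(2 * sqrt((a+1/2)^2+t^2)) - (a^2+t^2)/2) has_real_derivative
     b/(2 * sqrt((a-1/2)^2+b^2)^3) + b/(2 * sqrt((a+1/2)^2+b^2)^3) - b) (at b)" by (simp only:)
  then show ?thesis unfolding dV_dq2_def fst_conv snd_conv f by (rule DERIV_imp_deriv)
qed

lemma lin2: "2 \<le> (A::real) + B \<Longrightarrow> Z \<ge> 0 \<Longrightarrow> V = -A - B - Z/2 \<Longrightarrow> V \<le> -2"
  by linarith

lemma seg_in:
  fixes x :: real assumes "-1/2 < x" "x < 1/2"
  shows "Vpot (x,0) \<le> -2"
proof -
  have e1: "sqrt((x-1/2)^2+0^2) = 1/2 - x" using assms by simp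
  have e2: "sqrt((x+1/2)^2+0^2) = 1/2 + x" using assms by simp
  have g: "\<And>d1 d2::real. d1 > 0 \<Longrightarrow> d2 > 0 \<Longrightarrow> 1/(2 * d1) + 1/(2 * d2) = (d1 + d2)/(2 * (d1 * d2))"
    by (simp add: field_simps)
  have "1/(2 * (1/2 - x)) + 1/(2 * (1/2 + x)) = ((1/2 - x) + (1/2 + x))/(2 * ((1/2 - x) * (1/2 + x)))"
    using assms by (intro g) auto
  also have "\<dots> = 1/(2 * ((1/2 - x) * (1/2 + x)))" by simp
  also have "\<dots> \<ge> 2"
  proof -
    have "(1/2 - x) * (1/2 + x) \<le> 1/4" by (simp add: algebra_simps)
    moreover have "(1/2 - x) * (1/2 + x) > 0" using assms by simp
    ultimately show ?thesis by (simp add: divide_simps)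
  qed
  finally have "1/(2 * (1/2 - x)) + 1/(2 * (1/2 + x)) \<ge> 2" .
  moreover have "x^2+0^2 \<ge> (0::real)" by simp
  moreover have "Vpot (x,0) = -(1/(2 * (1/2 - x))) - 1/(2 * (1/2 + x)) - (x^2+0^2)/2"
    unfolding Vpot_eq e1 e2 by simp
  ultimately show ?thesis using lin2 by blast
qed

lemma sphere_V:
  assumes "norm q = (1::real)" shows "Vpot q > -2 + 1/100"
proof -
  obtain a b where q: "q = (a,b)" by (cases q)
  have h: "a^2 + b^2 = 1" using assms q by (simp add: norm_Pair)
  show ?thesis unfolding q Vpot_eq using sphere_ineq[OF h] h by simp
qed

lemma lin_aux: "(X::real) \<le> 13/20 \<Longrightarrow> Y \<le> 13/20 \<Longrightarrow> V = -X - Y - Z/2 \<Longrightarrow> Z < 1 \<Longrightarrow> -(13/10) - 1/2 \<le> V"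
  by linarith

lemma inside_f:
  assumes "norm q < (1::real)" "q \<noteq> prim_e" "q \<noteq> prim_s" "Vpot q \<le> -2 + 1/100"
  shows "1/(2 * sqrt((fst q-1/2)^2+(snd q)^2)^3) + 1/(2 * sqrt((fst q+1/2)^2+(snd q)^2)^3) > 1"
proof (rule ccontr)
  obtain a b where q: "q = (a,b)" by (cases q)
  have h: "a^2 + b^2 < 1" using assms q by (simp add: norm_Pair)
  define u where "u = sqrt((a-1/2)^2+b^2)"
  define v where "v = sqrt((a+1/2)^2+b^2)"
  have up: "u > 0" unfolding u_def using assms(2) q by (auto simp: sum_power2_gt_zero_iff prim_e_def)
  have vp: "v > 0" unfolding v_def using assms(3) q by (auto simp: sum_power2_gt_zero_iff prim_s_def)
  assume "\<not> ?thesis"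
  hence s: "1/(2 * u^3) + 1/(2 * v^3) \<le> 1" unfolding u_def v_def q by simp
  have "1/(2 * u^3) > 0" "1/(2 * v^3) > 0" using up vp by auto
  hence "1/(2 * u^3) \<le> 1" "1/(2 * v^3) \<le> 1" using s by linarith+
  hence "1/(2 * u) \<le> 13/20" "1/(2 * v) \<le> 13/20" using inner_ineq up vp by auto
  moreover have "Vpot q = -(1/(2 * u)) - 1/(2 * v) - (a^2+b^2)/2" unfolding q Vpot_eq u_def v_def by simp
  ultimately have "Vpot q \<ge> -(13/10) - 1/2" using h lin_aux by blast
  thus False using assms(4) by simp
qed

lemma barrier:
  assumes "connected K" "K \<subseteq> sublevel (-2 + 1/100)" "K \<inter> ball 0 1 \<noteq> {}"
  shows "K \<subseteq> ball 0 1"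
proof (rule ccontr)
  assume "\<not> K \<subseteq> ball 0 1"
  hence "K - ball 0 1 \<noteq> {}" by blast
  from connected_Int_frontier[OF assms(1) assms(3) this]
  obtain q where "q \<in> K" "q \<in> sphere 0 1" by auto
  hence "norm q = 1" "Vpot q \<le> -2 + 1/100" using assms(2) by (auto simp: sublevel_def)
  thus False using sphere_V by fastforce
qed

theorem lemma4p1:
  shows "\<exists>\<epsilon>>0. (\<exists>K. bdd_comp (-2 + \<epsilon>) K) \<and>
           (\<forall>K. bdd_comp (-2 + \<epsilon>) K \<longrightarrow>
              (\<forall>q\<in>K. dV_dq2 q = 0 \<longrightarrow> snd q = 0))"
proof (intro exI[of _ "1/100"] conjI)
  show "(1/100::real) > 0" by simp
  define S where "S = (\<lambda>x. (x, 0::real)) ` {-1/2<..<(1/2::real)}"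
  have Ssub: "S \<subseteq> sublevel (-2 + 1/100)"
  proof
    fix q assume "q \<in> S"
    then obtain x where x: "-1/2 < x" "x < 1/2" "q = (x,0)" unfolding S_def by auto
    show "q \<in> sublevel (-2 + 1/100)" using seg_in[OF x(1,2)] x
      by (auto simp: sublevel_def prim_e_def prim_s_def)
  qed
  have Sconn: "connected S" unfolding S_def
    by (rule connected_continuous_image) (auto intro!: continuous_intros)
  have S0: "(0,0) \<in> S" unfolding S_def by auto
  define K where "K = connected_component_set (sublevel (-2 + 1/100)) (0,0)"
  have S0': "(0,0) \<in> sublevel (-2 + 1/100)" using S0 Ssub by auto
  have Kc: "K \<in> components (sublevel (-2 + 1/100))" unfolding K_def by (rule componentsI[OF S0'])
  have SK: "S \<subseteq> K" unfolding K_def by (rule connected_component_maximal[OF S0 Sconn Ssub])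
  have "K \<subseteq> ball 0 1"
  proof (rule barrier)
    show "connected K" using Kc by (rule in_components_connected)
    show "K \<subseteq> sublevel (-2 + 1/100)" using Kc by (rule in_components_subset)
    show "K \<inter> ball 0 1 \<noteq> {}" using SK S0 by (auto simp: zero_prod_def)
  qed
  hence bK: "bounded K" using bounded_ball bounded_subset by blast
  have eS: "prim_e \<in> closure S"
    unfolding closure_sequential
  proof (intro exI conjI allI)
    show "(\<lambda>n. (1/2 - 1/(real n + 3), 0::real)) \<longlonglongrightarrow> prim_e"
      unfolding prim_e_def
      using tendsto_Pair[OF tendsto_diff[OF tendsto_const lim3] tendsto_const, of "1/2" "0::real"] by simp
    fix n :: nat
    have h1: "1/(real n + 3) < 1" by simp
    have h2: "1/(real n + 3) > 0" by simp
    have h3: "2/(real n + 3) < 2" by (simp add: divide_simps)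
    show "(1/2 - 1/(real n + 3), 0::real) \<in> S" unfolding S_def
      by (rule image_eqI[where x="1/2 - 1/(real n + 3)"]) (use h1 h2 h3 in auto)
  qed
  have sS: "prim_s \<in> closure S"
    unfolding closure_sequential
  proof (intro exI conjI allI)
    show "(\<lambda>n. (-1/2 + 1/(real n + 3), 0::real)) \<longlonglongrightarrow> prim_s"
      unfolding prim_s_def
      using tendsto_Pair[OF tendsto_add[OF tendsto_const lim3] tendsto_const, of "-1/2" "0::real"] by simp
    fix n :: nat
    have h1: "1/(real n + 3) < 1" by simp
    have h2: "1/(real n + 3) > 0" by simp
    have h3: "2/(real n + 3) < 2" by (simp add: divide_simps)
    show "(-1/2 + 1/(real n + 3), 0::real) \<in> S" unfolding S_def
      by (rule image_eqI[where x="-1/2 + 1/(real n + 3)"]) (use h1 h2 h3 in auto)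
  qed
  have "prim_e \<in> closure K" "prim_s \<in> closure K" using eS sS closure_mono[OF SK] by auto
  thus "\<exists>K. bdd_comp (-2 + 1/100) K" unfolding bdd_comp_def using Kc bK by blast
next
  show "\<forall>K. bdd_comp (-2 + 1/100) K \<longrightarrow> (\<forall>q\<in>K. dV_dq2 q = 0 \<longrightarrow> snd q = 0)"
  proof (intro allI impI ballI)
    fix K q assume K: "bdd_comp (-2 + 1/100) K" and qK: "q \<in> K" and d: "dV_dq2 q = 0"
    have Kc: "K \<in> components (sublevel (-2 + 1/100))" and eK: "prim_e \<in> closure K"
      using K unfolding bdd_comp_def by auto
    have "prim_e \<in> ball 0 1" by (simp add: prim_e_def norm_Pair)
    hence "ball 0 1 \<inter> closure K \<noteq> {}" using eK by blast
    hence "ball 0 1 \<inter> K \<noteq> {}" using open_Int_closure_eq_empty[of "ball 0 1" K] by auto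
    hence "K \<subseteq> ball 0 1"
      using barrier in_components_connected[OF Kc] in_components_subset[OF Kc] by blast
    hence qb: "norm q < 1" using qK by auto
    have qs: "q \<noteq> prim_e" "q \<noteq> prim_s" "Vpot q \<le> -2 + 1/100"
      using qK in_components_subset[OF Kc] by (auto simp: sublevel_def)
    obtain a b where q: "q = (a,b)" by (cases q)
    have f: "1/(2 * sqrt((a-1/2)^2+b^2)^3) + 1/(2 * sqrt((a+1/2)^2+b^2)^3) > 1"
      using inside_f[OF qb qs] q by simp
    have "dV_dq2 q = b * (1/(2 * sqrt((a-1/2)^2+b^2)^3) + 1/(2 * sqrt((a+1/2)^2+b^2)^3) - 1)"
      using dV[of a b] qs q by (simp add: algebra_simps)
    with d f show "snd q = 0" using q by simp
  qed
qed
end
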